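(* Let $0<w_1<\dots<w_n$ be integers with $\sum_{i=1}^n w_i<2^n-1$, and let $\Delta$ satisfy $2^{n/2}\le\Delta\le d<2^n$. Then there exists $j\in\{0,1,\dots,n-1\}$ such that $\#\{t: f_t>2^j\}>\frac{\Delta}{2^{j+1}n}$.
   Context: Let $w(S)=\sum_{i\in S}w_i$. The frequency is $f_t=\#\{S\subseteq\{1,\dots,n\}:w(S)=t\}$ for integers $t\ge0$. The parameter is $d=\sum_{0\le t<2^n}\max\{0,f_t-1\}$. *)

theory Defs
  imports Complex_Main
begin

definition freq :: "(nat \<Rightarrow> nat) \<Rightarrow> nat \<Rightarrow> nat \<Rightarrow> nat" where
  "freq w n t = card {S. S \<subseteq> {1..n} \<and> (\<Sum>i\<in>S. w i) = t}"

text \<open>d = sum over 0 <= t < 2^n of max 0 (f_t - 1); nat subtraction truncates at 0.\<close>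
definition dpar :: "(nat \<Rightarrow> nat) \<Rightarrow> nat \<Rightarrow> nat" where
  "dpar w n = (\<Sum>t<2^n. freq w n t - 1)"

end

theory Submission
  imports Defs
begin

lemma geo2: "(\<Sum>j<n. (2::nat)^j) = 2^n - 1"
  by (induction n) auto

lemma pointwise:
  fixes f :: nat
  shows "f \<le> 2^n \<Longrightarrow> f - 1 \<le> (\<Sum>j<n. if 2^j < f then 2^j else 0)"
proof (induction n)
  case 0
  then show ?case by simp
next
  case (Suc n)
  show ?case
  proof (cases "f \<le> 2^n")
    case True
    then show ?thesis using Suc.IH by simp
  next
    case False
    have "\<And>j. j < n \<Longrightarrow> (2::nat)^j < f"
      proof -
      fix j :: nat assume "j < n"
      then have "(2::nat)^j < 2^n" by (simp add: power_strict_increasing)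
      then show "(2::nat)^j < f" using False by linarith
    qed
    then have "(\<Sum>j<n. if 2^j < f then 2^j else 0) = (\<Sum>j<n. (2::nat)^j)"
      by (intro sum.cong) auto
    then have "(\<Sum>j<Suc n. if 2^j < f then 2^j else 0) = (2::nat)^n - 1 + 2^n"
      using False by (simp add: geo2)
    then show ?thesis using Suc.prems by simp
  qed
qed

lemma freq_le: "freq w n t \<le> 2^n"
proof -
  have "{S. S \<subseteq> {1..n} \<and> (\<Sum>i\<in>S. w i) = t} \<subseteq> Pow {1..n}" by auto
  then have "freq w n t \<le> card (Pow {1..(n::nat)})"
    unfolding freq_def by (intro card_mono) auto
  then show ?thesis by (simp add: card_Pow)
qed

lemma fin_set: "finite {t. freq w n t > k}"
proof -
  have "{t. freq w n t > k} \<subseteq> (\<lambda>S. \<Sum>i\<in>S. w i) ` Pow {1..n}"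
  proof
    fix t assume "t \<in> {t. freq w n t > k}"
    then have "freq w n t \<noteq> 0" by simp
    then have "{S. S \<subseteq> {1..n} \<and> (\<Sum>i\<in>S. w i) = t} \<noteq> {}"
      unfolding freq_def by (metis card.empty)
    then show "t \<in> (\<lambda>S. \<Sum>i\<in>S. w i) ` Pow {1..n}" by blast
  qed
  then show ?thesis by (rule finite_subset) simp
qed

theorem lemma3p5:
  fixes w :: "nat \<Rightarrow> nat" and n :: nat and \<Delta> :: real
  assumes pos: "\<And>i. 1 \<le> i \<Longrightarrow> i \<le> n \<Longrightarrow> 0 < w i"
    and incr: "\<And>i j. 1 \<le> i \<Longrightarrow> i < j \<Longrightarrow> j \<le> n \<Longrightarrow> w i < w j"
    and sumw: "(\<Sum>i=1..n. w i) < 2^n - 1"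
    and D1: "2 powr (real n / 2) \<le> \<Delta>"
    and D2: "\<Delta> \<le> real (dpar w n)"
    and D3: "dpar w n < 2^n"
  shows "\<exists>j<n. real (card {t. freq w n t > 2^j}) > \<Delta> / (2^(j+1) * real n)"
proof (rule ccontr)
  assume H: "\<not> ?thesis"
  have n0: "n > 0" using sumw by (cases n) auto
  have "(0::real) < 2 powr (real n / 2)" by simp
  then have Dpos: "\<Delta> > 0" using D1 by linarith
  let ?N = "\<lambda>j. card {t. freq w n t > 2^j}"
  have Nle: "real (?N j) \<le> \<Delta> / (2^(j+1) * real n)" if "j < n" for j
    using H that by (meson not_less)
  have "dpar w n \<le> (\<Sum>t<(2::nat)^n. \<Sum>j<n. if 2^j < freq w n t then 2^j else 0)"
    unfolding dpar_def by (intro sum_mono pointwise freq_le)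
  also have "\<dots> = (\<Sum>j<n. \<Sum>t<(2::nat)^n. if 2^j < freq w n t then 2^j else 0)"
    by (rule sum.swap)
  also have "\<dots> = (\<Sum>j<n. 2^j * card {t\<in>{..<(2::nat)^n}. 2^j < freq w n t})"
    by (intro sum.cong refl) (simp add: sum.If_cases Int_def)
  also have "\<dots> \<le> (\<Sum>j<n. 2^j * ?N j)"
    by (intro sum_mono mult_le_mono2 card_mono fin_set) auto
  finally have "real (dpar w n) \<le> (\<Sum>j<n. 2^j * real (?N j))"
    unfolding of_nat_le_iff[symmetric, where 'a=real] by simp
  also have "\<dots> \<le> (\<Sum>j<n. \<Delta> / (2 * real n))"
  proof (intro sum_mono)
    fix j assume "j \<in> {..<n}"
    then have "2^j * real (?N j) \<le> 2^j * (\<Delta> / (2^(j+1) * real n))"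
      using Nle by (intro mult_left_mono) auto
    also have "\<dots> = \<Delta> / (2 * real n)" by (simp add: field_simps)
    finally show "2^j * real (?N j) \<le> \<Delta> / (2 * real n)" .
  qed
  also have "\<dots> = \<Delta> / 2" using n0 by simp
  finally show False using D2 Dpos by linarith
qed

end
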